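(* Let $\mathbf{A}\in\mathbb{R}^{(\ell m)\times(qn)}$ be a block matrix with $\ell\times q$ blocks of size $m\times n$, and let $\mathbf{B}=\mathbf{S}_{\ell,m}\mathbf{A}\mathbf{S}_{q,n}^\top$, viewed as an $m\times n$ grid of blocks of size $\ell\times q$. Let $\mathbf{A}_1,\dots,\mathbf{A}_p$ be the distinct nonzero blocks of $\mathbf{A}$, with $\eta_k$ the number of block positions of $\mathbf{A}$ at which $\mathbf{A}_k$ occurs, and $\mathbf{B}_1,\dots,\mathbf{B}_\rho$ the distinct nonzero blocks of $\mathbf{B}$, with $\xi_\kappa$ the number of block positions of $\mathbf{B}$ at which $\mathbf{B}_\kappa$ occurs. Let $C_k=\{(i,j)\in[m]\times[n]:[\mathbf{A}_k]_{ij}\neq0\}$ and $D_\kappa=\{(i,j)\in[\ell]\times[q]:[\mathbf{B}_\kappa]_{ij}\neq0\}$. Then $$\mathrm{card}\Bigl(\bigcup_{k=1}^p C_k\Bigr)=\sum_{\kappa=1}^\rho\xi_\kappa,\qquad \mathrm{card}\Bigl(\bigcup_{\kappa=1}^\rho D_\kappa\Bigr)=\sum_{k=1}^p\eta_k.$$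
   Context: Blocks of $\mathbf{A}$: $\mathbf{A}^{(\gamma,\delta)}_{\alpha\beta}=\mathbf{A}_{(\gamma-1)m+\alpha,(\delta-1)n+\beta}$ for $(\gamma,\delta)\in[\ell]\times[q]$, $(\alpha,\beta)\in[m]\times[n]$. Blocks of $\mathbf{B}$: $\mathbf{B}^{(\alpha,\beta)}_{\gamma\delta}=\mathbf{B}_{(\alpha-1)\ell+\gamma,(\beta-1)q+\delta}$. For $a,b\ge1$, $s=ab$, the shuffle permutation matrix $\mathbf{S}_{a,b}\in\mathbb{R}^{s\times s}$ has row $(i-1)a+j$ equal to $\mathbf{e}_{(j-1)b+i}^\top$ ($i\in[b]$, $j\in[a]$). "Distinct blocks" means the set of distinct nonzero matrices occurring among the blocks; zero blocks are not counted. *)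

theory Defs
  imports "Jordan_Normal_Form.Matrix"
begin

text \<open>Indices are 0-based: the paper's index i in [a] corresponds to i-1 in {0..<a}.\<close>

text \<open>Shuffle permutation matrix S_{a,b} (size ab x ab): row i*a+j (i<b, j<a) is e_{j*b+i}^T.\<close>
definition shuffle_mat :: "nat \<Rightarrow> nat \<Rightarrow> real mat" where
  "shuffle_mat a b = mat (a*b) (a*b) (\<lambda>(r,c). if c = (r mod a) * b + r div a then 1 else 0)"

definition blk :: "real mat \<Rightarrow> nat \<Rightarrow> nat \<Rightarrow> nat \<Rightarrow> nat \<Rightarrow> real mat" where
  "blk M r c i j = mat r c (\<lambda>(a,b). M $$ (i*r+a, j*c+b))"

definition distinct_blocks :: "real mat \<Rightarrow> nat \<Rightarrow> nat \<Rightarrow> nat \<Rightarrow> nat \<Rightarrow> real mat set" where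
  "distinct_blocks M u v r c =
     {blk M r c i j | i j. i < u \<and> j < v} - {0\<^sub>m r c}"

definition occurrences :: "real mat \<Rightarrow> nat \<Rightarrow> nat \<Rightarrow> nat \<Rightarrow> nat \<Rightarrow> real mat \<Rightarrow> nat" where
  "occurrences M u v r c X = card {(i,j). i < u \<and> j < v \<and> blk M r c i j = X}"

definition supp_mat :: "real mat \<Rightarrow> (nat \<times> nat) set" where
  "supp_mat X = {(i,j). i < dim_row X \<and> j < dim_col X \<and> X $$ (i,j) \<noteq> 0}"

end

theory Submission
  imports Defs
begin

lemma idx_lt: "r < a*b \<Longrightarrow> (r mod (a::nat)) * b + r div a < a*b"
proof -
  assume h: "r < a*b"
  hence a0: "a > 0" by (cases a) auto
  have "r div a < b" using h by (simp add: div_less_iff_less_mult mult.commute a0)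
  moreover have "r mod a < a" using a0 by simp
  ultimately have "(r mod a) * b + r div a < (r mod a) * b + b" by simp
  also have "\<dots> = (r mod a + 1) * b" by simp
  also have "\<dots> \<le> a * b" using \<open>r mod a < a\<close> by (intro mult_right_mono) auto
  finally show ?thesis .
qed

lemma shuffle_left:
  assumes "M \<in> carrier_mat (a*b) k" "r < a*b" "c < k"
  shows "(shuffle_mat a b * M) $$ (r,c) = M $$ ((r mod a) * b + r div a, c)"
proof -
  let ?t = "(r mod a) * b + r div a"
  have t: "?t < a*b" using idx_lt assms(2) by blast
  have "(shuffle_mat a b * M) $$ (r,c) = (\<Sum>i<a*b. (if i = ?t then 1 else 0) * M $$ (i,c))"
    using assms unfolding shuffle_mat_def
    by (simp add: scalar_prod_def atLeast0LessThan)
  also have "\<dots> = (\<Sum>i<a*b. if i = ?t then M $$ (i,c) else 0)"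
    by (intro sum.cong) auto
  also have "\<dots> = M $$ (?t, c)"
    using t by simp
  finally show ?thesis .
qed

lemma shuffle_right:
  assumes "M \<in> carrier_mat k (a*b)" "r < k" "c < a*b"
  shows "(M * transpose_mat (shuffle_mat a b)) $$ (r,c) = M $$ (r, (c mod a) * b + c div a)"
proof -
  let ?t = "(c mod a) * b + c div a"
  have t: "?t < a*b" using idx_lt assms(3) by blast
  have "(M * transpose_mat (shuffle_mat a b)) $$ (r,c) = (\<Sum>i<a*b. M $$ (r,i) * (if i = ?t then 1 else 0))"
    using assms unfolding shuffle_mat_def
    by (simp add: scalar_prod_def atLeast0LessThan)
  also have "\<dots> = (\<Sum>i<a*b. if i = ?t then M $$ (r,i) else 0)"
    by (intro sum.cong) auto
  also have "\<dots> = M $$ (r, ?t)"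
    using t by simp
  finally show ?thesis .
qed

lemma blk_nz: "blk M r c i j \<noteq> 0\<^sub>m r c \<longleftrightarrow> (\<exists>a<r. \<exists>b<c. M $$ (i*r+a, j*c+b) \<noteq> 0)"
  unfolding blk_def by (auto simp: mat_eq_iff)

lemma sum_occ:
  "(\<Sum>Y \<in> distinct_blocks M u v r c. occurrences M u v r c Y)
     = card {(i,j). i < u \<and> j < v \<and> blk M r c i j \<noteq> 0\<^sub>m r c}"
proof -
  let ?D = "distinct_blocks M u v r c"
  let ?S = "\<lambda>Y. {(i,j). i < u \<and> j < v \<and> blk M r c i j = Y}"
  have fin: "finite ?D"
  proof -
    have "{blk M r c i j | i j. i < u \<and> j < v} = (\<lambda>(i,j). blk M r c i j) ` ({..<u} \<times> {..<v})"
      by auto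
    thus ?thesis unfolding distinct_blocks_def by simp
  qed
  have finS: "\<And>Y. finite (?S Y)"
    by (rule finite_subset[of _ "{..<u} \<times> {..<v}"]) auto
  have "(\<Sum>Y \<in> ?D. occurrences M u v r c Y) = (\<Sum>Y \<in> ?D. card (?S Y))"
    unfolding occurrences_def by simp
  also have "\<dots> = card (\<Union>Y\<in>?D. ?S Y)"
    by (rule card_UN_disjoint[symmetric]) (use fin finS in auto)
  also have "(\<Union>Y\<in>?D. ?S Y) = {(i,j). i < u \<and> j < v \<and> blk M r c i j \<noteq> 0\<^sub>m r c}"
    unfolding distinct_blocks_def by auto
  finally show ?thesis .
qed

lemma union_supp:
  "(\<Union>X \<in> distinct_blocks M u v r c. supp_mat X)
    = {(a,b). a < r \<and> b < c \<and> (\<exists>i<u. \<exists>j<v. M $$ (i*r+a, j*c+b) \<noteq> 0)}"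
  (is "?L = ?R")
proof
  show "?L \<subseteq> ?R"
    unfolding distinct_blocks_def supp_mat_def blk_def by auto
next
  show "?R \<subseteq> ?L"
  proof
    fix x assume "x \<in> ?R"
    then obtain a b i j where x: "x = (a,b)" "a < r" "b < c" "i < u" "j < v"
      "M $$ (i*r+a, j*c+b) \<noteq> 0" by auto
    have "blk M r c i j \<noteq> 0\<^sub>m r c" using blk_nz x by blast
    hence "blk M r c i j \<in> distinct_blocks M u v r c"
      unfolding distinct_blocks_def using x by auto
    moreover have "x \<in> supp_mat (blk M r c i j)"
      using x unfolding supp_mat_def blk_def by auto
    ultimately show "x \<in> ?L" by blast
  qed
qed

lemma B_entry:
  assumes "A \<in> carrier_mat (l*m) (q*n)"
    and "\<alpha> < m" "\<beta> < n" "\<gamma> < l" "\<delta> < q"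
  shows "(shuffle_mat l m * A * transpose_mat (shuffle_mat q n)) $$ (\<alpha>*l+\<gamma>, \<beta>*q+\<delta>)
         = A $$ (\<gamma>*m+\<alpha>, \<delta>*n+\<beta>)"
proof -
  have x: "\<alpha>*l+\<gamma> < l*m"
  proof -
    have "\<alpha>*l+\<gamma> < \<alpha>*l + l" using assms by simp
    also have "\<dots> = (\<alpha>+1)*l" by simp
    also have "\<dots> \<le> m*l" using assms by (intro mult_right_mono) auto
    finally show ?thesis by (simp add: mult.commute)
  qed
  have y: "\<beta>*q+\<delta> < q*n"
  proof -
    have "\<beta>*q+\<delta> < \<beta>*q + q" using assms by simp
    also have "\<dots> = (\<beta>+1)*q" by simp
    also have "\<dots> \<le> n*q" using assms by (intro mult_right_mono) auto
    finally show ?thesis by (simp add: mult.commute)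
  qed
  have y2: "\<delta>*n+\<beta> < q*n"
  proof -
    have "\<delta>*n+\<beta> < \<delta>*n + n" using assms by simp
    also have "\<dots> = (\<delta>+1)*n" by simp
    also have "\<dots> \<le> q*n" using assms by (intro mult_right_mono) auto
    finally show ?thesis .
  qed
  have c1: "shuffle_mat l m * A \<in> carrier_mat (l*m) (q*n)"
    by (rule mult_carrier_mat[OF _ assms(1)]) (simp add: shuffle_mat_def)
  have "(shuffle_mat l m * A * transpose_mat (shuffle_mat q n)) $$ (\<alpha>*l+\<gamma>, \<beta>*q+\<delta>)
     = (shuffle_mat l m * A) $$ (\<alpha>*l+\<gamma>, ((\<beta>*q+\<delta>) mod q)*n + (\<beta>*q+\<delta>) div q)"
    by (rule shuffle_right[OF c1 x y])
  also have "((\<beta>*q+\<delta>) mod q)*n + (\<beta>*q+\<delta>) div q = \<delta>*n+\<beta>"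
    using assms by simp
  also have "(shuffle_mat l m * A) $$ (\<alpha>*l+\<gamma>, \<delta>*n+\<beta>)
      = A $$ (((\<alpha>*l+\<gamma>) mod l)*m + (\<alpha>*l+\<gamma>) div l, \<delta>*n+\<beta>)"
    using shuffle_left[OF assms(1) x y2] .
  also have "((\<alpha>*l+\<gamma>) mod l)*m + (\<alpha>*l+\<gamma>) div l = \<gamma>*m+\<alpha>"
    using assms by simp
  finally show ?thesis .
qed

theorem theorem4:
  fixes A :: "real mat" and l q m n :: nat
  assumes "l \<ge> 1" "q \<ge> 1" "m \<ge> 1" "n \<ge> 1"
    and "A \<in> carrier_mat (l*m) (q*n)"
  defines "B \<equiv> shuffle_mat l m * A * transpose_mat (shuffle_mat q n)"
  shows "card (\<Union>X \<in> distinct_blocks A l q m n. supp_mat X)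
           = (\<Sum>Y \<in> distinct_blocks B m n l q. occurrences B m n l q Y)
       \<and> card (\<Union>Y \<in> distinct_blocks B m n l q. supp_mat Y)
           = (\<Sum>X \<in> distinct_blocks A l q m n. occurrences A l q m n X)"
proof -
  have E: "\<And>\<alpha> \<beta> \<gamma> \<delta>. \<alpha> < m \<Longrightarrow> \<beta> < n \<Longrightarrow> \<gamma> < l \<Longrightarrow> \<delta> < q \<Longrightarrow>
      B $$ (\<alpha>*l+\<gamma>, \<beta>*q+\<delta>) = A $$ (\<gamma>*m+\<alpha>, \<delta>*n+\<beta>)"
    unfolding B_def using B_entry[OF assms(5)] by blast
  have 1: "(\<Union>X \<in> distinct_blocks A l q m n. supp_mat X)
      = {(i,j). i < m \<and> j < n \<and> blk B l q i j \<noteq> 0\<^sub>m l q}"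
    unfolding union_supp blk_nz by (auto simp: E) (metis E)+
  have 2: "(\<Union>X \<in> distinct_blocks B m n l q. supp_mat X)
      = {(i,j). i < l \<and> j < q \<and> blk A m n i j \<noteq> 0\<^sub>m m n}"
    unfolding union_supp blk_nz by (auto simp: E) (metis E)+
  show ?thesis unfolding sum_occ 1 2 by simp
qed

end
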